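(* Let $\mathcal{S}\subset\mathbb{R}^n$ be compact convex with $\|x\|\le D$ for all $x\in\mathcal{S}$, and let $f_t(\theta)=\frac12\|\theta-y_t\|^2$ with $y_t\in\mathcal{S}$, $t=1,\dots,T$. Let $\theta_1\in\mathcal{S}$ and define, for $\gamma\in(0,1)$, $$\theta_{t+1}=\frac{\gamma-\gamma^t}{1-\gamma^t}\theta_t+\frac{1-\gamma}{1-\gamma^t}y_t=\theta_t-\frac{1-\gamma}{1-\gamma^t}\nabla f_t(\theta_t).$$ Let $\theta_t^*=\operatorname{argmin}_{\theta\in\mathcal{S}}f_t(\theta)\,(=y_t)$ and $V^*=\sum_{t=2}^T\|\theta_t^*-\theta_{t-1}^*\|$. If $1-\gamma=1/T^\beta$ with $\beta\in(0,1)$, then $$\sum_{t=1}^T\big(f_t(\theta_t)-f_t(\theta_t^* )\big)\le 2DT^\beta\big(\|\theta_1-\theta_1^*\|+V^*\big).$$ *)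

theory Defs
  imports "HOL-Analysis.Analysis"
begin

end

theory Submission
  imports Defs
begin

theorem theorem3p2:
  fixes S :: "(real ^ 'n) set" and D :: real and T :: nat
    and y \<theta> \<theta>star :: "nat \<Rightarrow> real ^ 'n"
    and f :: "nat \<Rightarrow> real ^ 'n \<Rightarrow> real"
    and \<gamma> \<beta> :: real
  assumes "compact S" and "convex S"
    and "\<forall>x\<in>S. norm x \<le> D"
    and "\<And>t \<theta>'. f t \<theta>' = (1/2) * (norm (\<theta>' - y t))\<^sup>2"
    and "\<forall>t\<in>{1..T}. y t \<in> S"
    and "\<theta> 1 \<in> S"
    and "0 < \<gamma>" and "\<gamma> < 1"
    and "\<forall>t. 1 \<le> t \<and> t < T \<longrightarrow>
           \<theta> (t + 1) = ((\<gamma> - \<gamma> ^ t) / (1 - \<gamma> ^ t)) *\<^sub>R \<theta> t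
                        + ((1 - \<gamma>) / (1 - \<gamma> ^ t)) *\<^sub>R y t"
    and "\<forall>t\<in>{1..T}. \<theta>star t \<in> S \<and> (\<forall>\<theta>'\<in>S. f t (\<theta>star t) \<le> f t \<theta>')"
    and "0 < \<beta>" and "\<beta> < 1"
    and "1 - \<gamma> = 1 / (real T powr \<beta>)"
  shows "(\<Sum>t=1..T. f t (\<theta> t) - f t (\<theta>star t))
         \<le> 2 * D * real T powr \<beta> *
            (norm (\<theta> 1 - \<theta>star 1) + (\<Sum>t=2..T. norm (\<theta>star t - \<theta>star (t - 1))))"
proof -
  note fdef = assms(4)
  have star: "\<theta>star t = y t" if "t \<in> {1..T}" for t
  proof -
    have "f t (\<theta>star t) \<le> f t (y t)" using assms(10) assms(5) that by blast
    then have "(norm (\<theta>star t - y t))\<^sup>2 \<le> 0" using fdef[of t] by simp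
    then show ?thesis by simp
  qed
  have D0: "0 \<le> D" using assms(3) assms(6) norm_ge_zero order_trans by blast
  have T1: "T \<ge> 1"
  proof (rule ccontr)
    assume "\<not> T \<ge> 1" then have "T = 0" by simp
    then show False using assms(8) assms(13) by simp
  qed
  have Tpos: "real T powr \<beta> > 0" using T1 by simp
  have g1: "1 / (1 - \<gamma>) = real T powr \<beta>" using assms(13) Tpos by simp
  have inS: "\<theta> t \<in> S" if "1 \<le> t" "t \<le> T" for t
    using that
  proof (induction t)
    case 0 then show ?case by simp
  next
    case (Suc m)
    show ?case
    proof (cases "m = 0")
      case True then show ?thesis using assms(6) by simp
    next
      case False
      then have m1: "1 \<le> m" "m < T" using Suc by auto
      have ih: "\<theta> m \<in> S" using Suc m1 by simp
      have ym: "y m \<in> S" using assms(5) m1 by simp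
      have gm: "\<gamma> ^ m < 1" using assms(7,8) m1 power_strict_decreasing[of 0 m \<gamma>] by simp
      have gm2: "\<gamma> ^ m \<le> \<gamma>" using assms(7,8) m1 power_decreasing[of 1 m \<gamma>] by simp
      have c1: "0 \<le> (\<gamma> - \<gamma> ^ m) / (1 - \<gamma> ^ m)" using gm gm2 by simp
      have c2: "0 \<le> (1 - \<gamma>) / (1 - \<gamma> ^ m)" using gm assms(8) by simp
      have c3: "(\<gamma> - \<gamma> ^ m) / (1 - \<gamma> ^ m) + (1 - \<gamma>) / (1 - \<gamma> ^ m) = 1"
        using gm by (simp add: field_simps)
      have "\<theta> (Suc m) = ((\<gamma> - \<gamma> ^ m) / (1 - \<gamma> ^ m)) *\<^sub>R \<theta> m
                        + ((1 - \<gamma>) / (1 - \<gamma> ^ m)) *\<^sub>R y m"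
        using assms(9) m1 by simp
      then show ?thesis using convexD[OF assms(2) ih ym c1 c2 c3] by simp
    qed
  qed
  define a where "a t = norm (\<theta> t - y t)" for t
  define d where "d t = norm (y t - y (t - 1))" for t
  have rec: "a (t+1) \<le> \<gamma> * a t + d (t+1)" if "1 \<le> t" "t < T" for t
  proof -
    have gm: "\<gamma> ^ t < 1" using assms(7,8) that power_strict_decreasing[of 0 t \<gamma>] by simp
    have gm2: "\<gamma> ^ t \<le> \<gamma>" using assms(7,8) that power_decreasing[of 1 t \<gamma>] by simp
    define c where "c = (\<gamma> - \<gamma> ^ t) / (1 - \<gamma> ^ t)"
    have c0: "0 \<le> c" using gm gm2 by (simp add: c_def)
    have cg: "c \<le> \<gamma>"
    proof -
      have "\<gamma> - \<gamma> ^ t \<le> \<gamma> * (1 - \<gamma> ^ t)"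
        using gm assms(7) assms(8) mult_left_le_one_le[of "\<gamma>^t" \<gamma>] by (simp add: algebra_simps)
      moreover have "0 < 1 - \<gamma> ^ t" using gm by simp
      ultimately show ?thesis unfolding c_def by (simp add: pos_divide_le_eq)
    qed
    have cs: "(1 - \<gamma>) / (1 - \<gamma> ^ t) = 1 - c" using gm by (simp add: c_def field_simps)
    have "\<theta> (t+1) = c *\<^sub>R \<theta> t + (1 - c) *\<^sub>R y t" using assms(9) that cs by (simp add: c_def)
    then have "\<theta> (t+1) - y (t+1) = c *\<^sub>R (\<theta> t - y t) + (y t - y (t+1))"
      by (simp add: algebra_simps)
    then have "a (t+1) \<le> norm (c *\<^sub>R (\<theta> t - y t)) + norm (y t - y (t+1))"
      unfolding a_def by (metis norm_triangle_ineq)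
    also have "\<dots> = c * a t + d (t+1)" using c0 by (simp add: a_def d_def norm_minus_commute)
    also have "\<dots> \<le> \<gamma> * a t + d (t+1)" using cg by (simp add: a_def mult_right_mono)
    finally show ?thesis .
  qed
  have key: "(1 - \<gamma>) * (\<Sum>t=1..m. a t) + \<gamma> * a m \<le> a 1 + (\<Sum>t=2..m. d t)"
    if "1 \<le> m" "m \<le> T" for m
    using that
  proof (induction m)
    case 0 then show ?case by simp
  next
    case (Suc m)
    show ?case
    proof (cases "m = 0")
      case True then show ?thesis by (simp add: algebra_simps)
    next
      case False
      then have m1: "1 \<le> m" "m < T" using Suc by auto
      have ih: "(1 - \<gamma>) * (\<Sum>t=1..m. a t) + \<gamma> * a m \<le> a 1 + (\<Sum>t=2..m. d t)"
        using Suc m1 by simp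
      have r: "a (Suc m) \<le> \<gamma> * a m + d (Suc m)" using rec[OF m1] by simp
      have s1: "(\<Sum>t=1..Suc m. a t) = (\<Sum>t=1..m. a t) + a (Suc m)" using m1 by simp
      have s2: "(\<Sum>t=2..Suc m. d t) = (\<Sum>t=2..m. d t) + d (Suc m)" using m1 by simp
      show ?thesis unfolding s1 s2 using ih r by (simp add: algebra_simps)
    qed
  qed
  have a0: "0 \<le> a t" for t by (simp add: a_def)
  have sumA: "(\<Sum>t=1..T. a t) \<le> real T powr \<beta> * (a 1 + (\<Sum>t=2..T. d t))"
  proof -
    have "(1 - \<gamma>) * (\<Sum>t=1..T. a t) \<le> a 1 + (\<Sum>t=2..T. d t)"
    proof -
      have "0 \<le> \<gamma> * a T" using a0[of T] assms(7) by simp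
      then show ?thesis using key[OF T1 order_refl] by linarith
    qed
    then have "(\<Sum>t=1..T. a t) \<le> (a 1 + (\<Sum>t=2..T. d t)) / (1 - \<gamma>)"
      using assms(8) by (simp add: le_divide_eq mult.commute)
    moreover have "(a 1 + (\<Sum>t=2..T. d t)) / (1 - \<gamma>) = (1 / (1 - \<gamma>)) * (a 1 + (\<Sum>t=2..T. d t))"
      by simp
    ultimately show ?thesis unfolding g1 by simp
  qed
  have aD: "a t \<le> 2 * D" if "t \<in> {1..T}" for t
  proof -
    have "a t \<le> norm (\<theta> t) + norm (y t)" unfolding a_def by (rule norm_triangle_ineq4)
    also have "\<dots> \<le> D + D"
    proof -
      have "norm (\<theta> t) \<le> D" using assms(3) inS[of t] that by simp
      moreover have "norm (y t) \<le> D" using assms(3) assms(5) that by blast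
      ultimately show ?thesis by linarith
    qed
    finally show ?thesis by simp
  qed
  have lhs: "(\<Sum>t=1..T. f t (\<theta> t) - f t (\<theta>star t)) = (\<Sum>t=1..T. (1/2) * (a t)\<^sup>2)"
    by (rule sum.cong) (simp_all add: star fdef a_def)
  have "(\<Sum>t=1..T. (1/2) * (a t)\<^sup>2) \<le> (\<Sum>t=1..T. D * a t)"
  proof (rule sum_mono)
    fix t assume t: "t \<in> {1..T}"
    have "(a t)\<^sup>2 \<le> 2 * D * a t" using aD[OF t] a0[of t] by (simp add: power2_eq_square mult_right_mono)
    then show "(1/2) * (a t)\<^sup>2 \<le> D * a t" by simp
  qed
  also have "\<dots> = D * (\<Sum>t=1..T. a t)" by (simp add: sum_distrib_left)
  also have "\<dots> \<le> D * (real T powr \<beta> * (a 1 + (\<Sum>t=2..T. d t)))"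
    using sumA D0 by (rule mult_left_mono)
  also have "\<dots> \<le> 2 * D * real T powr \<beta> * (a 1 + (\<Sum>t=2..T. d t))"
  proof -
    have "0 \<le> (\<Sum>t=2..T. d t)" by (simp add: d_def sum_nonneg)
    then have "0 \<le> D * (real T powr \<beta> * (a 1 + (\<Sum>t=2..T. d t)))"
      using D0 Tpos a0[of 1] by simp
    then show ?thesis by simp
  qed
  also have "\<dots> = 2 * D * real T powr \<beta> *
            (norm (\<theta> 1 - \<theta>star 1) + (\<Sum>t=2..T. norm (\<theta>star t - \<theta>star (t - 1))))"
  proof -
    have "(\<Sum>t=2..T. d t) = (\<Sum>t=2..T. norm (\<theta>star t - \<theta>star (t - 1)))"
    proof (rule sum.cong)
      fix t assume t: "t \<in> {2..T}"
      then have "t \<in> {1..T}" "t - 1 \<in> {1..T}" by auto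
      then show "d t = norm (\<theta>star t - \<theta>star (t - 1))" unfolding d_def using star by metis
    qed simp
    moreover have "a 1 = norm (\<theta> 1 - \<theta>star 1)" using star[of 1] T1 by (simp add: a_def)
    ultimately show ?thesis by simp
  qed
  finally show ?thesis using lhs by simp
qed

end
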